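(* Let $p$ be a prime, let $n\geq 3$, and let $L$ be a nilpotent Lie ring of order $p^{n}$ and nilpotency class $n-1$. Then $pL\leq L^{n-1}$, where $pL=\{pa\mid a\in L\}$.
   Context: A Lie ring is an abelian group with a bilinear, alternating product (written $ab$) satisfying the Jacobi identity; its order is the order of the underlying additive group. The lower central series is $L^{1}=L$, $L^{2}=\langle ab\mid a,b\in L\rangle$ and for $i>2$, $L^{i}=\langle ab\mid a\in L^{i-1},\,b\in L\rangle$ (additive subgroups generated by these products). $L$ has nilpotency class $c$ if $L^{c+1}=\{0\}$ and $L^{c}\neq\{0\}$. *)

theory Defs
  imports Main "HOL-Computational_Algebra.Primes"
begin

definition lie_ring :: "('a::ab_group_add \<Rightarrow> 'a \<Rightarrow> 'a) \<Rightarrow> bool" where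
  "lie_ring br \<longleftrightarrow>
     (\<forall>a b c. br (a + b) c = br a c + br b c) \<and>
     (\<forall>a b c. br a (b + c) = br a b + br a c) \<and>
     (\<forall>a. br a a = 0) \<and>
     (\<forall>a b c. br a (br b c) + br b (br c a) + br c (br a b) = 0)"

inductive_set add_gen :: "'a::ab_group_add set \<Rightarrow> 'a set" for S where
  zero: "0 \<in> add_gen S"
| base: "x \<in> S \<Longrightarrow> x \<in> add_gen S"
| plus: "x \<in> add_gen S \<Longrightarrow> y \<in> add_gen S \<Longrightarrow> x + y \<in> add_gen S"
| neg:  "x \<in> add_gen S \<Longrightarrow> - x \<in> add_gen S"

text \<open>Lower central series: lcs br 1 = L, lcs br (i+1) = generated by products
  a b with a in lcs br i. (Index 0 is unused and set to L.)\<close>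
fun lcs :: "('a::ab_group_add \<Rightarrow> 'a \<Rightarrow> 'a) \<Rightarrow> nat \<Rightarrow> 'a set" where
  "lcs br 0 = UNIV"
| "lcs br (Suc 0) = UNIV"
| "lcs br (Suc (Suc i)) = add_gen {br a b | a b. a \<in> lcs br (Suc i)}"

definition nilpotency_class :: "('a::ab_group_add \<Rightarrow> 'a \<Rightarrow> 'a) \<Rightarrow> nat \<Rightarrow> bool" where
  "nilpotency_class br c \<longleftrightarrow> lcs br (c + 1) = {0} \<and> lcs br c \<noteq> {0}"

fun nat_mult :: "nat \<Rightarrow> 'a::ab_group_add \<Rightarrow> 'a" where
  "nat_mult 0 a = 0"
| "nat_mult (Suc n) a = a + nat_mult n a"

end

theory Submission
  imports Defs
begin


definition sg :: "'a::ab_group_add set \<Rightarrow> bool" where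
  "sg H \<longleftrightarrow> 0 \<in> H \<and> (\<forall>x\<in>H. \<forall>y\<in>H. x + y \<in> H) \<and> (\<forall>x\<in>H. - x \<in> H)"

lemma sg_add_gen: "sg (add_gen S)"
  unfolding sg_def by (auto intro: add_gen.intros)

lemma add_gen_base: "S \<subseteq> add_gen S"
  by (auto intro: add_gen.base)

lemma add_gen_least: assumes "sg H" "S \<subseteq> H" shows "add_gen S \<subseteq> H"
proof
  fix x assume "x \<in> add_gen S" then show "x \<in> H"
    by induction (use assms in \<open>auto simp: sg_def\<close>)
qed

lemma sg_UNIV: "sg UNIV" by (simp add: sg_def)

lemma sg_lcs: "sg (lcs br j)"
  by (induction br j rule: lcs.induct) (auto simp: sg_UNIV sg_add_gen)

lemma sg_diff: "sg H \<Longrightarrow> x \<in> H \<Longrightarrow> y \<in> H \<Longrightarrow> x - y \<in> H"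
  unfolding sg_def by (metis diff_conv_add_uminus)

lemma nat_mult_add: "nat_mult k (x + y) = nat_mult k x + nat_mult k y"
  by (induction k) (auto simp: algebra_simps)
lemma nat_mult_neg: "nat_mult k (- x) = - nat_mult k x"
  by (induction k) (auto simp: algebra_simps)
lemma nat_mult_zero[simp]: "nat_mult k 0 = (0::'a::ab_group_add)"
  by (induction k) auto
lemma nat_mult_plus: "nat_mult (a + b) x = nat_mult a x + nat_mult b x"
  by (induction a) (auto simp: algebra_simps)
lemma nat_mult_mult: "nat_mult (a * b) x = nat_mult a (nat_mult b x)"
  by (induction a) (auto simp: nat_mult_plus nat_mult_add)
lemma nat_mult_one[simp]: "nat_mult 1 x = x" by simp

lemma sg_nat_mult: "sg H \<Longrightarrow> x \<in> H \<Longrightarrow> nat_mult k x \<in> H"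
  by (induction k) (auto simp: sg_def)

lemma sg_pre_nat_mult: "sg H \<Longrightarrow> sg {x. nat_mult k x \<in> H}"
  unfolding sg_def by (auto simp: nat_mult_add nat_mult_neg)

context fixes br :: "'a::ab_group_add \<Rightarrow> 'a \<Rightarrow> 'a" assumes L: "lie_ring br"
begin

lemma ladd1: "br (a + b) c = br a c + br b c" using L unfolding lie_ring_def by blast
lemma ladd2: "br a (b + c) = br a b + br a c" using L unfolding lie_ring_def by blast
lemma lalt[simp]: "br a a = 0" using L unfolding lie_ring_def by blast
lemma lzero1[simp]: "br 0 c = 0" using ladd1[of 0 0 c] by simp
lemma lzero2[simp]: "br c 0 = 0" using ladd2[of c 0 0] by simp
lemma lneg1: "br (- a) c = - br a c"
proof -
  have "br a c + br (-a) c = 0" using ladd1[of a "-a" c] by simp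
  then show ?thesis using minus_unique by metis
qed
lemma lneg2: "br c (- a) = - br c a"
proof -
  have "br c a + br c (-a) = 0" using ladd2[of c a "-a"] by simp
  then show ?thesis using minus_unique by metis
qed
lemma lanti: "br a b = - br b a"
proof -
  have h: "br (a+b) (a+b) = br a a + br b a + (br a b + br b b)" by (simp only: ladd1 ladd2)
  have "0 = br b a + br a b" using h by simp
  then show ?thesis by (simp add: eq_neg_iff_add_eq_0 add.commute)
qed
lemma lmult1: "br (nat_mult k a) c = nat_mult k (br a c)"
  by (induction k) (auto simp: ladd1)
lemma lmult2: "br c (nat_mult k a) = nat_mult k (br c a)"
  by (induction k) (auto simp: ladd2)

lemma sg_br2: "sg K \<Longrightarrow> sg {c. br v c \<in> K}"
  unfolding sg_def by (auto simp: ladd2 lneg2)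
lemma sg_br1: "sg K \<Longrightarrow> sg {v. \<forall>c. br v c \<in> K}"
  unfolding sg_def by (auto simp: ladd1 lneg1)

end

lemma lcs_Suc: assumes "j \<ge> 1" shows "lcs br (Suc j) = add_gen {br a b | a b. a \<in> lcs br j}"
proof (cases j)
  case 0 then show ?thesis using assms by simp
next
  case (Suc j') then show ?thesis by (simp only: lcs.simps(3))
qed

lemma lcs_br: assumes "j \<ge> 1" "a \<in> lcs br j" shows "br a b \<in> lcs br (Suc j)"
proof -
  have "br a b \<in> {br a b | a b. a \<in> lcs br j}" using assms(2) by blast
  then show ?thesis unfolding lcs_Suc[OF assms(1)] by (rule add_gen.base)
qed

lemma add_gen_mono: "S \<subseteq> T \<Longrightarrow> add_gen S \<subseteq> add_gen T"
  by (rule add_gen_least[OF sg_add_gen]) (use add_gen_base in blast)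

lemma lcs_dec: "lcs br (Suc j) \<subseteq> lcs br j"
proof (induction j)
  case 0 then show ?case by simp
next
  case (Suc j)
  show ?case
  proof (cases j)
    case 0 then show ?thesis by simp
  next
    case (Suc j')
    have IH: "lcs br (Suc (Suc j')) \<subseteq> lcs br (Suc j')" using Suc.IH Suc by simp
    have "lcs br (Suc (Suc (Suc j'))) = add_gen {br a b | a b. a \<in> lcs br (Suc (Suc j'))}"
      by (rule lcs.simps(3))
    also have "\<dots> \<subseteq> add_gen {br a b | a b. a \<in> lcs br (Suc j')}"
      by (rule add_gen_mono) (use IH in blast)
    also have "\<dots> = lcs br (Suc (Suc j'))" by (rule lcs.simps(3)[symmetric])
    finally show ?thesis using Suc by simp
  qed
qed

lemma lcs_mono: "j \<le> k \<Longrightarrow> lcs br k \<subseteq> lcs br j"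
  by (induction k rule: dec_induct) (use lcs_dec in blast)+

lemma lcs_stable0: "j \<ge> 1 \<Longrightarrow> lcs br j = lcs br (Suc j) \<Longrightarrow> lcs br (j+m) = lcs br (Suc (j + m))"
proof (induction m)
  case 0 then show ?case by (simp only: add_0_right)
next
  case (Suc m)
  have e: "lcs br (j+m) = lcs br (Suc (j+m))" by (rule Suc.IH[OF Suc.prems])
  have j1: "1 \<le> j + m" using Suc.prems(1) by (rule trans_le_add1)
  have A: "lcs br (Suc (j+m)) = add_gen {br a b | a b. a \<in> lcs br (j+m)}"
    by (rule lcs_Suc[OF j1])
  have B: "lcs br (Suc (Suc (j+m))) = add_gen {br a b | a b. a \<in> lcs br (Suc (j+m))}"
    by (rule lcs_Suc) (rule le_SucI[OF j1])
  have "lcs br (Suc (j+m)) = add_gen {br a b | a b. a \<in> lcs br (j+m)}" by (rule A)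
  also have "\<dots> = add_gen {br a b | a b. a \<in> lcs br (Suc (j+m))}" unfolding e ..
  also have "\<dots> = lcs br (Suc (Suc (j+m)))" by (rule B[symmetric])
  finally show ?case unfolding add_Suc_right .
qed

lemma lcs_stable: "j \<ge> 1 \<Longrightarrow> lcs br j = lcs br (Suc j) \<Longrightarrow> lcs br j = lcs br (j + m)"
proof (induction m)
  case (Suc m)
  have "lcs br j = lcs br (j + m)" by (rule Suc.IH[OF Suc.prems])
  also have "\<dots> = lcs br (Suc (j + m))" by (rule lcs_stable0[OF Suc.prems])
  finally show ?case unfolding add_Suc_right .
qed (simp only: add_0_right)



lemma lagrange_sg:
  fixes A B :: "'a::{ab_group_add,finite} set"
  assumes "sg A" "sg B" "A \<subseteq> B"
  shows "card A dvd card B"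
proof -
  let ?C = "(\<lambda>h. (+) h ` A) ` B"
  have U: "\<Union>?C = B"
  proof
    show "\<Union>?C \<subseteq> B" using assms unfolding sg_def by auto
    show "B \<subseteq> \<Union>?C"
    proof
      fix h assume "h \<in> B"
      moreover have "h \<in> (+) h ` A" using assms(1) unfolding sg_def by force
      ultimately show "h \<in> \<Union>?C" by blast
    qed
  qed
  have "card A * card ?C = card (\<Union>?C)"
  proof (rule card_partition)
    show "\<And>c. c\<in>?C \<Longrightarrow> card c = card A" by (auto simp: card_image)
    show "\<And>c1 c2. c1\<in>?C \<Longrightarrow> c2\<in>?C \<Longrightarrow> c1 \<noteq> c2 \<Longrightarrow> c1 \<inter> c2 = {}"
    proof -
      fix c1 c2 assume "c1 \<in> ?C" "c2 \<in> ?C" "c1 \<noteq> c2"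
      then obtain h1 h2 where c: "c1 = (+) h1 ` A" "c2 = (+) h2 ` A" by blast
      show "c1 \<inter> c2 = {}"
      proof (rule ccontr)
        assume "c1 \<inter> c2 \<noteq> {}"
        then obtain a1 a2 where a: "a1 \<in> A" "a2 \<in> A" "h1 + a1 = h2 + a2" using c by auto
        have "c1 \<subseteq> c2"
        proof
          fix z assume "z \<in> c1"
          then obtain a where "a \<in> A" "z = h1 + a" using c by auto
          moreover have "a2 - a1 + a \<in> A" using assms(1) a \<open>a \<in> A\<close> sg_diff unfolding sg_def by blast
          moreover have "h1 + a = h2 + (a2 - a1 + a)" using a(3) by (simp add: algebra_simps)
          ultimately show "z \<in> c2" using c by auto
        qed
        moreover have "c2 \<subseteq> c1"
        proof
          fix z assume "z \<in> c2"
          then obtain a where "a \<in> A" "z = h2 + a" using c by auto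
          moreover have "a1 - a2 + a \<in> A" using assms(1) a \<open>a \<in> A\<close> sg_diff unfolding sg_def by blast
          moreover have "h2 + a = h1 + (a1 - a2 + a)" using a(3) by (simp add: algebra_simps)
          ultimately show "z \<in> c1" using c by auto
        qed
        ultimately show False using \<open>c1 \<noteq> c2\<close> by blast
      qed
    qed
  qed auto
  then show ?thesis using U by (metis dvd_triv_left)
qed

lemma sum_shift: "finite A \<Longrightarrow> (\<Sum>g\<in>A. f g + x) = sum f A + nat_mult (card A) (x::'a::ab_group_add)"
  by (induction A rule: finite_induct) (auto simp: algebra_simps)

lemma order_kill: "nat_mult (card (UNIV::'a::{ab_group_add,finite} set)) (x::'a) = 0"
proof -
  have "(\<Sum>g\<in>(UNIV::'a set). g + x) = (\<Sum>g\<in>UNIV. g)"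
    by (rule sum.reindex_bij_witness[of _ "\<lambda>g. g - x" "\<lambda>g. g + x"]) auto
  then show ?thesis using sum_shift[of "UNIV::'a set" "\<lambda>g. g" x] by simp
qed

lemma step_card:
  fixes A B :: "'a::{ab_group_add,finite} set"
  assumes p: "prime p" and cU: "card (UNIV::'a set) = p ^ n"
    and "sg A" "sg B" "A \<subseteq> B" "A \<noteq> B"
  shows "p * card A \<le> card B"
proof -
  obtain k where k: "card B = card A * k" using lagrange_sg[OF assms(3-5)] by blast
  have "card B dvd p ^ n" using lagrange_sg[OF assms(4) sg_UNIV] cU by simp
  then have "k dvd p ^ n" using k by (metis dvd_mult_right)
  then obtain i where i: "k = p ^ i" using divides_primepow_nat[OF p] by blast
  have "card A < card B" using assms(5,6) by (simp add: psubset_card_mono)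
  then have "i \<noteq> 0" using k i by (metis mult.right_neutral power_0 less_irrefl)
  moreover have "1 \<le> p" using prime_gt_1_nat[OF p] by simp
  ultimately have "p \<le> k" using i self_le_power[of p i] by simp
  then show ?thesis using k by (simp add: mult.commute)
qed



locale LR =
  fixes br :: "'a::{ab_group_add, finite} \<Rightarrow> 'a \<Rightarrow> 'a" and p n :: nat
  assumes pr: "prime p" and n3: "n \<ge> 3" and L: "lie_ring br"
    and cU: "card (UNIV :: 'a set) = p ^ n"
    and cl: "nilpotency_class br (n - 1)"
begin

lemma p1: "p > 1" using pr prime_gt_1_nat by blast

lemma lcs_n: "lcs br n = {0}" using cl n3 unfolding nilpotency_class_def by simp

lemma strict: assumes "1 \<le> j" "j \<le> n - 1" shows "lcs br (Suc j) \<noteq> lcs br j"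
proof
  assume eq: "lcs br (Suc j) = lcs br j"
  have s: "\<And>m. lcs br j = lcs br (j + m)" using lcs_stable[OF assms(1) eq[symmetric]] .
  have e1: "j + (n - 1 - j) = n - 1" using assms by simp
  have e2: "j + (n - j) = n" using assms n3 by simp
  have "lcs br (n - 1) = lcs br j" using s[of "n - 1 - j"] unfolding e1 by (rule sym)
  also have "\<dots> = lcs br n" using s[of "n - j"] unfolding e2 .
  finally have "lcs br (n - 1) = {0}" using lcs_n by simp
  then show False using cl unfolding nilpotency_class_def by blast
qed

lemma gen_not_univ: "add_gen (insert x (lcs br 2)) \<noteq> UNIV"
proof
  assume U: "add_gen (insert x (lcs br 2)) = UNIV"
  have s3: "sg (lcs br 3)" by (rule sg_lcs)
  have x: "\<forall>b. br x b \<in> lcs br 3"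
  proof -
    have "add_gen (insert x (lcs br 2)) \<subseteq> {b. br x b \<in> lcs br 3}"
    proof (rule add_gen_least[OF sg_br2[OF L s3]])
      show "insert x (lcs br 2) \<subseteq> {b. br x b \<in> lcs br 3}"
      proof
        fix b assume "b \<in> insert x (lcs br 2)"
        then show "b \<in> {b. br x b \<in> lcs br 3}"
        proof
          assume "b = x" then show ?thesis using s3 by (simp add: sg_def lalt[OF L])
        next
          assume "b \<in> lcs br 2"
          then have "br b x \<in> lcs br 3" using lcs_br[of 2 b br x] by (simp add: numeral_3_eq_3)
          then show ?thesis using s3 lanti[OF L, of x b] unfolding sg_def by auto
        qed
      qed
    qed
    then show ?thesis using U by auto
  qed
  have "add_gen (insert x (lcs br 2)) \<subseteq> {v. \<forall>c. br v c \<in> lcs br 3}"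
  proof (rule add_gen_least[OF sg_br1[OF L s3]])
    show "insert x (lcs br 2) \<subseteq> {v. \<forall>c. br v c \<in> lcs br 3}"
      using x lcs_br[of 2 _ br] by (auto simp: numeral_3_eq_3)
  qed
  then have "\<forall>a c. br a c \<in> lcs br 3" using U by auto
  then have all3: "\<forall>a c. br a c \<in> lcs br 3" .
  have "lcs br 2 = add_gen {br a b | a b. a \<in> lcs br 1}" using lcs_Suc[of 1 br] by (simp add: numeral_2_eq_2)
  also have "\<dots> \<subseteq> lcs br 3" by (rule add_gen_least[OF sg_lcs]) (use all3 in blast)
  finally have "lcs br 2 \<subseteq> lcs br 3" .
  moreover have "lcs br 3 \<subseteq> lcs br 2" using lcs_dec[of br 2] by (simp add: numeral_3_eq_3)
  ultimately have eq: "lcs br 3 = lcs br 2" by blast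
  have ne: "lcs br (Suc 2) \<noteq> lcs br 2" by (rule strict) (use n3 in auto)
  have e3: "Suc 2 = (3::nat)" by simp
  have "lcs br 3 \<noteq> lcs br 2" using ne unfolding e3 .
  then show False using eq by blast
qed

abbreviation c where "c j \<equiv> card (lcs br j)"

lemma stepc: "sg (A::'a set) \<Longrightarrow> sg B \<Longrightarrow> A \<subseteq> B \<Longrightarrow> A \<noteq> B \<Longrightarrow> p * card A \<le> card B"
  using step_card[OF pr cU] by blast

lemma cstep: "1 \<le> j \<Longrightarrow> j \<le> n - 1 \<Longrightarrow> p * c (Suc j) \<le> c j"
  using stepc[OF sg_lcs sg_lcs lcs_dec strict] by blast

lemma c1: "c 1 = p ^ n" using cU by simp

lemma cn: "c n = 1" using lcs_n by simp

lemma c2: "p ^ 2 * c 2 \<le> p ^ n"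
proof -
  have "lcs br 2 \<noteq> UNIV" using strict[of 1] n3 by (simp add: numeral_2_eq_2)
  then obtain x where x: "x \<notin> lcs br 2" by blast
  let ?M = "add_gen (insert x (lcs br 2))"
  have "lcs br 2 \<subseteq> ?M" using add_gen_base by blast
  moreover have "lcs br 2 \<noteq> ?M" using x add_gen_base by blast
  ultimately have "p * c 2 \<le> card ?M" using stepc[OF sg_lcs sg_add_gen] by blast
  moreover have "p * card ?M \<le> p ^ n" using stepc[OF sg_add_gen sg_UNIV, of "insert x (lcs br 2)"] gen_not_univ[of x] cU by simp
  ultimately have "p * (p * c 2) \<le> p ^ n" using mult_le_mono2 le_trans by blast
  moreover have "p ^ 2 * c 2 = p * (p * c 2)" by (simp only: power2_eq_square mult.assoc)
  ultimately show ?thesis by (simp only:)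
qed

lemma cval: "2 \<le> j \<Longrightarrow> j \<le> n \<Longrightarrow> c j = p ^ (n - j)"
proof -
  assume j: "2 \<le> j" "j \<le> n"
  have up: "c j * p ^ (j - 2) \<le> c 2" if "2 \<le> j" "j \<le> n" for j
    using that
  proof (induction j rule: dec_induct)
    case base then show ?case by simp
  next
    case (step k)
    have "p * c (Suc k) \<le> c k" using cstep[of k] step by simp
    have e: "Suc k - 2 = Suc (k - 2)" using step by simp
    have "c (Suc k) * p ^ (Suc k - 2) = (p * c (Suc k)) * p ^ (k - 2)" unfolding e by simp
    also have "\<dots> \<le> c k * p ^ (k - 2)" using \<open>p * c (Suc k) \<le> c k\<close> by simp
    finally have "c (Suc k) * p ^ (Suc k - 2) \<le> c k * p ^ (k - 2)" .
    then show ?case using step by simp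
  qed
  have cjn: "c j * p ^ j \<le> p ^ n"
  proof -
    have "p ^ (2 + (j - 2)) = p ^ 2 * p ^ (j - 2)" by (rule power_add)
    moreover have "2 + (j - 2) = j" using j by simp
    ultimately have "p ^ j = p ^ 2 * p ^ (j - 2)" by metis
    then have "c j * p ^ j = p ^ 2 * (c j * p ^ (j - 2))" by (simp add: mult_ac)
    also have "\<dots> \<le> p ^ 2 * c 2" using up[OF j] by (rule mult_le_mono2)
    finally show ?thesis by (rule le_trans[OF _ c2])
  qed
  have e: "n - j + j = n" using j by simp
  have pn: "p ^ n = p ^ (n - j) * p ^ j" using power_add[of p "n - j" j] unfolding e .
  have "c j * p ^ j \<le> p ^ (n - j) * p ^ j" using cjn unfolding pn .
  moreover have pos: "0 < p ^ j" using p1 by simp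
  ultimately have u: "c j \<le> p ^ (n - j)" by (metis mult_le_cancel2)
  have lo: "p ^ k \<le> c (n - k)" if "k \<le> n - 1" for k
    using that
  proof (induction k)
    case 0 then show ?case using cn by simp
  next
    case (Suc k)
    have k1: "1 \<le> n - Suc k" "n - Suc k \<le> n - 1" using Suc.prems n3 by simp_all
    have s: "Suc (n - Suc k) = n - k" using Suc.prems n3 by simp
    have a: "p * c (n - k) \<le> c (n - Suc k)" using cstep[OF k1] unfolding s .
    have "p ^ k \<le> c (n - k)" using Suc.IH Suc.prems by simp
    then have "p * p ^ k \<le> p * c (n - k)" by (rule mult_le_mono2)
    then have "p * p ^ k \<le> c (n - Suc k)" using a by (rule le_trans)
    then show ?case by simp
  qed
  have e3: "n - (n - j) = j" using j by simp
  have "p ^ (n - j) \<le> c j" using lo[of "n - j"] j unfolding e3 by simp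
  then show ?thesis using u by simp
qed

end


context LR begin

lemma exps: "nat_mult (p ^ n) (x::'a) = 0"
  using order_kill[where x=x] unfolding cU .

lemma c2v: "c 2 = p ^ (n - 2)" using cval n3 by simp

lemma pn2: "p ^ n = p * (p * c 2)"
proof -
  have e: "Suc (Suc (n - 2)) = n" using n3 by simp
  have "p ^ Suc (Suc (n - 2)) = p * (p * p ^ (n - 2))" by simp
  then show ?thesis unfolding e c2v .
qed

lemma cancel_p: "p * a \<le> p * b \<Longrightarrow> a \<le> b"
  using p1 by simp

lemma pL2: "nat_mult p (x::'a) \<in> lcs br 2"
proof (rule ccontr)
  assume nx: "nat_mult p x \<notin> lcs br 2"
  define L2 where "L2 = lcs br 2"
  have sL2: "sg L2" unfolding L2_def by (rule sg_lcs)
  have xn: "x \<notin> L2" using nx sg_nat_mult[OF sL2] unfolding L2_def by blast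
  define M where "M = add_gen (insert x L2)"
  define M1 where "M1 = add_gen (insert (nat_mult p x) L2)"
  have xM: "x \<in> M" unfolding M_def by (rule add_gen.base) simp
  have L2M: "L2 \<subseteq> M" unfolding M_def using add_gen_base by blast
  have M1M: "M1 \<subseteq> M" unfolding M1_def
  proof (rule add_gen_least)
    show "sg M" unfolding M_def by (rule sg_add_gen)
    show "insert (nat_mult p x) L2 \<subseteq> M"
      using sg_nat_mult[OF sg_add_gen xM[unfolded M_def]] L2M unfolding M_def by blast
  qed
  have L2M1: "L2 \<subseteq> M1" unfolding M1_def using add_gen_base by blast
  have pxM1: "nat_mult p x \<in> M1" unfolding M1_def by (rule add_gen.base) simp
  have "p * card L2 \<le> card M1"
    by (rule stepc[OF sL2 _ L2M1]) (use pxM1 nx L2_def M1_def sg_add_gen in auto)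
  moreover have "card M1 \<le> card M" by (rule card_mono[OF _ M1M]) simp
  moreover have "p * card M \<le> p ^ n"
    using stepc[OF sg_add_gen sg_UNIV, of "insert x L2"] gen_not_univ[of x] cU
    unfolding M_def L2_def by simp
  ultimately have "card M \<le> p * card L2" using pn2 cancel_p unfolding L2_def by simp
  with \<open>p * card L2 \<le> card M1\<close> \<open>card M1 \<le> card M\<close> have "card M1 = card M" by simp
  then have "M1 = M" using M1M by (simp add: card_subset_eq)
  then have xM1: "x \<in> M1" using xM by simp
  have iter: "x \<in> add_gen (insert (nat_mult (p ^ Suc m) x) L2)" for m
  proof (induction m)
    case 0 then show ?case using xM1 unfolding M1_def by simp
  next
    case (Suc m)
    define T where "T = add_gen (insert (nat_mult (p ^ Suc (Suc m)) x) L2)"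
    have sT: "sg T" unfolding T_def by (rule sg_add_gen)
    have L2T: "L2 \<subseteq> T" unfolding T_def using add_gen_base by blast
    have "add_gen (insert (nat_mult (p ^ Suc m) x) L2) \<subseteq> {z. nat_mult p z \<in> T}"
    proof (rule add_gen_least[OF sg_pre_nat_mult[OF sT]])
      have "nat_mult p (nat_mult (p ^ Suc m) x) = nat_mult (p ^ Suc (Suc m)) x"
        by (simp only: nat_mult_mult[symmetric] power_Suc)
      moreover have "nat_mult (p ^ Suc (Suc m)) x \<in> T" unfolding T_def by (rule add_gen.base) simp
      ultimately have "nat_mult p (nat_mult (p ^ Suc m) x) \<in> T" by simp
      moreover have "nat_mult p u \<in> T" if "u \<in> L2" for u
        using sg_nat_mult[OF sL2 that] L2T by blast
      ultimately show "insert (nat_mult (p ^ Suc m) x) L2 \<subseteq> {z. nat_mult p z \<in> T}" by blast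
    qed
    then have "nat_mult p x \<in> T" using Suc.IH by blast
    then have "M1 \<subseteq> T" unfolding M1_def using L2T by (intro add_gen_least[OF sT]) blast
    then show ?case using xM1 unfolding T_def by blast
  qed
  have e: "Suc (n - 1) = n" using n3 by simp
  have "x \<in> add_gen (insert 0 L2)" using iter[of "n - 1"] unfolding e exps .
  moreover have "add_gen (insert 0 L2) \<subseteq> L2" using sL2 by (intro add_gen_least) (auto simp: sg_def)
  ultimately show False using xn by blast
qed

lemma Eprop:
  assumes i1: "1 \<le> i" and H: "\<forall>a. nat_mult p a \<in> lcs br i" and j1: "1 \<le> j"
  shows "\<forall>x \<in> lcs br j. nat_mult p x \<in> lcs br (j + i - 1)"
  using j1
proof (induction j rule: dec_induct)
  case base then show ?case using H by simp
next
  case (step k)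
  have "lcs br (Suc k) = add_gen {br a b | a b. a \<in> lcs br k}" by (rule lcs_Suc[OF step(1)])
  also have "\<dots> \<subseteq> {x. nat_mult p x \<in> lcs br (Suc k + i - 1)}"
  proof (rule add_gen_least[OF sg_pre_nat_mult[OF sg_lcs]])
    show "{br a b | a b. a \<in> lcs br k} \<subseteq> {x. nat_mult p x \<in> lcs br (Suc k + i - 1)}"
    proof
      fix z assume "z \<in> {br a b | a b. a \<in> lcs br k}"
      then obtain a b where z: "z = br a b" "a \<in> lcs br k" by blast
      have "nat_mult p a \<in> lcs br (k + i - 1)" using step.IH z(2) by blast
      moreover have "1 \<le> k + i - 1" using i1 step(1) by simp
      ultimately have "br (nat_mult p a) b \<in> lcs br (Suc (k + i - 1))" by (intro lcs_br)
      moreover have "Suc (k + i - 1) = Suc k + i - 1" using i1 by simp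
      ultimately show "z \<in> {x. nat_mult p x \<in> lcs br (Suc k + i - 1)}"
        using z lmult1[OF L, of p a b] by simp
    qed
  qed
  finally show ?case by blast
qed

end


context LR begin

lemma main_step:
  assumes i2: "2 \<le> i" and iu: "Suc i \<le> n - 1" and H: "\<forall>a::'a. nat_mult p a \<in> lcs br i"
  shows "\<forall>a::'a. nat_mult p a \<in> lcs br (Suc i)"
proof (rule ccontr)
  assume "\<not> (\<forall>a::'a. nat_mult p a \<in> lcs br (Suc i))"
  then obtain a :: 'a where pa: "nat_mult p a \<notin> lcs br (Suc i)" by blast
  define L2 where "L2 = lcs br 2"
  define K where "K = lcs br (Suc (Suc i))"
  have sL2: "sg L2" unfolding L2_def by (rule sg_lcs)
  have sK: "sg K" unfolding K_def by (rule sg_lcs)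
  have E2: "\<forall>x \<in> L2. nat_mult p x \<in> lcs br (Suc i)"
    using Eprop[of i 2] i2 H unfolding L2_def by simp
  have aL2: "a \<notin> L2" using E2 pa by blast
  define A where "A = add_gen (insert a L2)"
  have sA: "sg A" unfolding A_def by (rule sg_add_gen)
  have "A \<noteq> UNIV" unfolding A_def L2_def by (rule gen_not_univ)
  then obtain b where bA: "b \<notin> A" by blast
  define B where "B = add_gen (insert b A)"
  have sB: "sg B" unfolding B_def by (rule sg_add_gen)
  have L2A: "L2 \<subseteq> A" unfolding A_def using add_gen_base by blast
  have aA: "a \<in> A" unfolding A_def by (rule add_gen.base) simp
  have AB: "A \<subseteq> B" unfolding B_def using add_gen_base by blast
  have bB: "b \<in> B" unfolding B_def by (rule add_gen.base) simp
  have "p * card L2 \<le> card A" by (rule stepc[OF sL2 sA L2A]) (use aA aL2 in blast)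
  moreover have "p * card A \<le> card B" by (rule stepc[OF sA sB AB]) (use bA bB in blast)
  ultimately have "p ^ n \<le> card B" using pn2 unfolding L2_def by (metis le_trans mult_le_mono2)
  moreover have "card B \<le> card (UNIV :: 'a set)" by (rule card_mono) auto
  ultimately have "card B = card (UNIV :: 'a set)" using cU by simp
  then have BU: "B = UNIV" by (metis card_subset_eq finite subset_UNIV)
  define P where "P = add_gen (insert (nat_mult p a) (lcs br (Suc i)))"
  have PL: "P \<subseteq> lcs br i" unfolding P_def
    by (rule add_gen_least[OF sg_lcs]) (use H lcs_dec[of br i] in blast)
  have LP: "lcs br (Suc i) \<subseteq> P" unfolding P_def using add_gen_base by blast
  have paP: "nat_mult p a \<in> P" unfolding P_def by (rule add_gen.base) simp
  have "p * c (Suc i) \<le> card P"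
    by (rule stepc[OF sg_lcs _ LP]) (use paP pa P_def sg_add_gen in auto)
  moreover have "c i = p * c (Suc i)"
  proof -
    have "c i = p ^ (n - i)" using cval i2 iu by simp
    moreover have "c (Suc i) = p ^ (n - Suc i)" using cval i2 iu by simp
    moreover have "n - i = Suc (n - Suc i)" using iu by simp
    ultimately show ?thesis by simp
  qed
  moreover have "card P \<le> c i" by (rule card_mono[OF _ PL]) simp
  ultimately have "card P = c i" by simp
  then have PeqL: "P = lcs br i" using PL by (simp add: card_subset_eq)
  have Ksub: "w \<in> lcs br (Suc i) \<Longrightarrow> br w c \<in> K" for w c
    unfolding K_def by (rule lcs_br) simp
  have alt: "br x x = 0" for x by (rule lalt[OF L])
  have R: "P \<subseteq> {v. br a v \<in> K}" unfolding P_def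
  proof (rule add_gen_least[OF sg_br2[OF L sK]])
    have "br a (nat_mult p a) = 0" by (simp add: lmult2[OF L] alt)
    then have "br a (nat_mult p a) \<in> K" using sK by (simp add: sg_def)
    moreover have "br a w \<in> K" if "w \<in> lcs br (Suc i)" for w
    proof -
      have "br w a \<in> K" using Ksub[OF that] .
      then have "- br w a \<in> K" using sK by (simp add: sg_def)
      then show ?thesis using lanti[OF L, of a w] by simp
    qed
    ultimately show "insert (nat_mult p a) (lcs br (Suc i)) \<subseteq> {v. br a v \<in> K}" by blast
  qed
  have key: "B \<subseteq> {c. br (nat_mult p a) c \<in> K}" unfolding B_def
  proof (rule add_gen_least[OF sg_br2[OF L sK]])
    have "nat_mult p b \<in> P" using H PeqL by simp
    then have "br a (nat_mult p b) \<in> K" using R by blast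
    then have "br (nat_mult p a) b \<in> K" by (simp add: lmult1[OF L] lmult2[OF L])
    moreover have "A \<subseteq> {c. br (nat_mult p a) c \<in> K}" unfolding A_def
    proof (rule add_gen_least[OF sg_br2[OF L sK]])
      have "br (nat_mult p a) a = 0" by (simp add: lmult1[OF L] alt)
      then have "br (nat_mult p a) a \<in> K" using sK by (simp add: sg_def)
      moreover have "br (nat_mult p a) u \<in> K" if "u \<in> L2" for u
      proof -
        have "nat_mult p u \<in> lcs br (Suc i)" using E2 that by blast
        then have "br (nat_mult p u) a \<in> K" by (rule Ksub)
        then have "- br (nat_mult p u) a \<in> K" using sK by (simp add: sg_def)
        moreover have "br (nat_mult p a) u = - br (nat_mult p u) a"
          using lanti[OF L, of a "nat_mult p u"] by (simp add: lmult1[OF L] lmult2[OF L])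
        ultimately show ?thesis by simp
      qed
      ultimately show "insert a L2 \<subseteq> {c. br (nat_mult p a) c \<in> K}" by blast
    qed
    ultimately show "insert b A \<subseteq> {c. br (nat_mult p a) c \<in> K}" by blast
  qed
  have S: "lcs br i \<subseteq> {v. \<forall>c. br v c \<in> K}" unfolding PeqL[symmetric] P_def
  proof (rule add_gen_least[OF sg_br1[OF L sK]])
    show "insert (nat_mult p a) (lcs br (Suc i)) \<subseteq> {v. \<forall>c. br v c \<in> K}"
      using key BU Ksub by blast
  qed
  have "lcs br (Suc i) = add_gen {br v c | v c. v \<in> lcs br i}" by (rule lcs_Suc) (use i2 in simp)
  also have "\<dots> \<subseteq> K" by (rule add_gen_least[OF sK]) (use S in blast)
  finally have "lcs br (Suc i) \<subseteq> lcs br (Suc (Suc i))" unfolding K_def .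
  moreover have "lcs br (Suc (Suc i)) \<subseteq> lcs br (Suc i)" by (rule lcs_dec)
  ultimately have "lcs br (Suc (Suc i)) = lcs br (Suc i)" by (rule subset_antisym[rotated])
  moreover have "lcs br (Suc (Suc i)) \<noteq> lcs br (Suc i)" by (rule strict) (use iu in simp_all)
  ultimately show False by contradiction
qed

lemma all_levels: "2 \<le> i \<Longrightarrow> i \<le> n - 1 \<Longrightarrow> \<forall>a::'a. nat_mult p a \<in> lcs br i"
proof (induction i rule: dec_induct)
  case base then show ?case using pL2 by blast
next
  case (step k)
  show ?case by (rule main_step) (use step in simp_all)
qed

end

theorem lemma2:
  fixes br :: "'a::{ab_group_add, finite} \<Rightarrow> 'a \<Rightarrow> 'a"
    and p n :: nat
  assumes "prime p"
    and "n \<ge> 3"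
    and "lie_ring br"
    and "card (UNIV :: 'a set) = p ^ n"
    and "nilpotency_class br (n - 1)"
  shows "{nat_mult p a | a. a \<in> (UNIV :: 'a set)} \<subseteq> lcs br (n - 1)"
proof -
  interpret LR br p n using assms by unfold_locales
  have "\<forall>a::'a. nat_mult p a \<in> lcs br (n - 1)" by (rule all_levels) (use assms(2) in simp_all)
  then show ?thesis by blast
qed


end
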